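(* Assume $\mathbf X$ is uniformly distributed on $[0,1]^d$ and $\|Y\|_\infty<\infty$. Assume $K_n,\gamma_1,\gamma_2\to\infty$ with $K_n^2e^{-2\gamma_2}\to0$ and $K_n^4\gamma_2^2\log(\gamma_1)/\gamma_1\to0$. Then $$\mathbb E\int_{[0,1]^d}\big|f_{\lambda^\star}(\mathbf x)-t_{\lambda^\star}(\mathbf x)\big|^2\mu(d\mathbf x)\to0\qquad(n\to\infty).$$
   Context: $(\mathbf X,Y)$ random pair, $\mu$ the law of $\mathbf X$, $\mathscr D_n$ an i.i.d. sample of copies of $(\mathbf X,Y)$ and $\Theta$ an independent randomization. The tree is a randomized CART tree with $K_n$ leaves $L_1,\dots,L_{K_n}$ built from $\Theta$ and $\mathscr D_n$ (axis-aligned binary splits; root $[0,1]^d$; a node with cell $A$ and split $(j,\alpha)$ has left child $\{\mathbf x\in A:x^{(j)}<\alpha\}$ and right child $\{\mathbf x\in A:x^{(j)}\ge\alpha\}$); its $K_n-1$ internal splits are $(j_k,\alpha_k)$. The parameter $\lambda^\star=(\mathbf W_1^\star,\mathbf b_1^\star,\mathbf W_2^\star,\mathbf b_2^\star,\mathbf W_{\rm out}^\star,b^\star_{\rm out})$ is: $\mathbf W_1^\star\in\mathbb R^{d\times(K_n-1)}$ with column $k$ equal to the $j_k$-th unit vector, $(\mathbf b_1^\star)_k=-\alpha_k$; $(\mathbf W_2^\star)_{k,k'}=+1$ (resp. $-1$) if split $k$ is on the root-to-$L_{k'}$ path and that path goes to its right (resp. left) child, $0$ if split $k$ is not on that path;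 $(\mathbf b_2^\star)_{k'}=-\ell(k')+\frac12$ with $\ell(k')$ the depth of $L_{k'}$; $(\mathbf W^\star_{\rm out})_{k'}=\frac12\mathbb E[Y\mid\mathbf X\in L_{k'}]$; $b^\star_{\rm out}=\frac12\sum_{k'}\mathbb E[Y\mid\mathbf X\in L_{k'}]$ (conditional expectations given the tree). With $\tau(u)=2\mathbf 1_{u\ge0}-1$ and $\sigma_i(u)=\tanh(\gamma_iu)$ entrywise, $t_{\lambda^\star}(\mathbf x)=\mathbf W^{\star\top}_{\rm out}\tau(\mathbf W_2^{\star\top}\tau(\mathbf W_1^{\star\top}\mathbf x+\mathbf b_1^\star)+\mathbf b_2^\star)+b^\star_{\rm out}$ and $f_{\lambda^\star}(\mathbf x)=\mathbf W^{\star\top}_{\rm out}\sigma_2(\mathbf W_2^{\star\top}\sigma_1(\mathbf W_1^{\star\top}\mathbf x+\mathbf b_1^\star)+\mathbf b_2^\star)+b^\star_{\rm out}$. The outer expectation is over $\Theta$ and $\mathscr D_n$. *)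

theory Defs
  imports "HOL-Probability.Probability"
begin

text \<open>Binary axis-aligned trees on real vectors indexed by 'd.
  Node j a l r: split on coordinate j at threshold a; left child {x. x$j < a},
  right child {x. x$j >= a}.\<close>
datatype 'd tree = Leaf | Node 'd real "'d tree" "'d tree"

fun inodes :: "'d tree \<Rightarrow> bool list list" where
  "inodes Leaf = []"
| "inodes (Node j a l r) = [] # map (Cons False) (inodes l) @ map (Cons True) (inodes r)"

fun leaves :: "'d tree \<Rightarrow> bool list list" where
  "leaves Leaf = [[]]"
| "leaves (Node j a l r) = map (Cons False) (leaves l) @ map (Cons True) (leaves r)"

fun split_at :: "'d tree \<Rightarrow> bool list \<Rightarrow> 'd \<times> real" where
  "split_at Leaf p = undefined"
| "split_at (Node j a l r) [] = (j, a)"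
| "split_at (Node j a l r) (b # p) = split_at (if b then r else l) p"

fun cell :: "(real^'d) set \<Rightarrow> 'd tree \<Rightarrow> bool list \<Rightarrow> (real^'d) set" where
  "cell A t [] = A"
| "cell A Leaf (b # p) = {}"
| "cell A (Node j a l r) (False # p) = cell {x\<in>A. x$j < a} l p"
| "cell A (Node j a l r) (True # p) = cell {x\<in>A. x$j \<ge> a} r p"

definition step :: "real \<Rightarrow> real" where
  "step u = 2 * (if u \<ge> 0 then 1 else 0) - 1"

definition net :: "(real \<Rightarrow> real) \<Rightarrow> (real \<Rightarrow> real) \<Rightarrow> nat \<Rightarrow> nat \<Rightarrow>
    (nat \<Rightarrow> real^'d) \<Rightarrow> (nat \<Rightarrow> real) \<Rightarrow> (nat \<Rightarrow> nat \<Rightarrow> real) \<Rightarrow> (nat \<Rightarrow> real) \<Rightarrow>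
    (nat \<Rightarrow> real) \<Rightarrow> real \<Rightarrow> real^'d \<Rightarrow> real" where
  "net s1 s2 m1 m2 W1 b1 W2 b2 Wout bout x =
     (\<Sum>k'<m2. Wout k' * s2 ((\<Sum>k<m1. W2 k k' * s1 (W1 k \<bullet> x + b1 k)) + b2 k')) + bout"

text \<open>Conditional expectation E[Y | X in A] (0 if P(X in A) = 0, as x/0 = 0).\<close>
definition cexp :: "'o measure \<Rightarrow> ('o \<Rightarrow> 'x) \<Rightarrow> ('o \<Rightarrow> real) \<Rightarrow> 'x set \<Rightarrow> real" where
  "cexp N X Y A = (\<integral>\<omega>. indicator A (X \<omega>) * Y \<omega> \<partial>N) / measure N (X -` A \<inter> space N)"

definition W1s :: "'d tree \<Rightarrow> nat \<Rightarrow> real^'d" where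
  "W1s t k = axis (fst (split_at t (inodes t ! k))) 1"

definition b1s :: "'d tree \<Rightarrow> nat \<Rightarrow> real" where
  "b1s t k = - snd (split_at t (inodes t ! k))"

definition W2s :: "'d tree \<Rightarrow> nat \<Rightarrow> nat \<Rightarrow> real" where
  "W2s t k k' = (let p = inodes t ! k; q = leaves t ! k' in
     if length p < length q \<and> take (length p) q = p
     then (if q ! length p then 1 else -1) else 0)"

definition b2s :: "'d tree \<Rightarrow> nat \<Rightarrow> real" where
  "b2s t k' = - real (length (leaves t ! k')) + 1/2"

definition Wouts :: "'o measure \<Rightarrow> ('o \<Rightarrow> real^'d) \<Rightarrow> ('o \<Rightarrow> real) \<Rightarrow> 'd tree \<Rightarrow> nat \<Rightarrow> real" where
  "Wouts N X Y t k' = cexp N X Y (cell (cbox 0 One) t (leaves t ! k')) / 2"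

definition bouts :: "'o measure \<Rightarrow> ('o \<Rightarrow> real^'d) \<Rightarrow> ('o \<Rightarrow> real) \<Rightarrow> 'd tree \<Rightarrow> real" where
  "bouts N X Y t = (\<Sum>k'<length (leaves t). cexp N X Y (cell (cbox 0 One) t (leaves t ! k'))) / 2"

text \<open>t_{lambda*}: the network with threshold activations (equals the tree).\<close>
definition t_net :: "'o measure \<Rightarrow> ('o \<Rightarrow> real^'d) \<Rightarrow> ('o \<Rightarrow> real) \<Rightarrow> 'd tree \<Rightarrow> real^'d \<Rightarrow> real" where
  "t_net N X Y t = net step step (length (inodes t)) (length (leaves t))
     (W1s t) (b1s t) (W2s t) (b2s t) (Wouts N X Y t) (bouts N X Y t)"

definition f_net :: "real \<Rightarrow> real \<Rightarrow> 'o measure \<Rightarrow> ('o \<Rightarrow> real^'d) \<Rightarrow> ('o \<Rightarrow> real) \<Rightarrow> 'd tree \<Rightarrow> real^'d \<Rightarrow> real" where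
  "f_net g1 g2 N X Y t = net (\<lambda>u. tanh (g1 * u)) (\<lambda>u. tanh (g2 * u))
     (length (inodes t)) (length (leaves t))
     (W1s t) (b1s t) (W2s t) (b2s t) (Wouts N X Y t) (bouts N X Y t)"

end

theory Submission
  imports Defs
begin


lemma len_inodes: "length (inodes t) + 1 = length (leaves t)"
  by (induction t) auto

lemma count_anc:
  "q \<in> set (leaves t) \<Longrightarrow>
   length (filter (\<lambda>p. length p < length q \<and> take (length p) q = p) (inodes t)) = length q"
proof (induction t arbitrary: q)
  case Leaf thus ?case by simp
next
  case (Node j a l r)
  from Node.prems obtain b q' where q: "q = b # q'" and
     "(b = False \<and> q' \<in> set (leaves l)) \<or> (b = True \<and> q' \<in> set (leaves r))" by auto
  then show ?case using Node.IH by (auto simp: filter_map o_def)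
qed

lemma sign_sum:
  fixes e :: "nat \<Rightarrow> real"
  assumes "finite S" "\<forall>k\<in>S. e k \<in> {-1,0,1}"
  shows "sum e S = card {k\<in>S. e k \<noteq> 0} \<or> sum e S \<le> real (card {k\<in>S. e k \<noteq> 0}) - 2"
  using assms
proof (induction S rule: finite_induct)
  case empty thus ?case by simp
next
  case (insert x F)
  have fin: "finite {k\<in>F. e k \<noteq> 0}" using insert by auto
  have c: "{k\<in>insert x F. e k \<noteq> 0} = (if e x = 0 then {k\<in>F. e k \<noteq> 0} else insert x {k\<in>F. e k \<noteq> 0})"
    by auto
  have cc: "card {k\<in>insert x F. e k \<noteq> 0} = (if e x = 0 then card {k\<in>F. e k \<noteq> 0} else Suc (card {k\<in>F. e k \<noteq> 0}))"
    using c fin insert(2) by auto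
  have ex: "e x \<in> {-1,0,1}" using insert by auto
  have IH: "sum e F = card {k\<in>F. e k \<noteq> 0} \<or> sum e F \<le> real (card {k\<in>F. e k \<noteq> 0}) - 2"
    using insert by auto
  show ?case using ex IH cc insert(1,2) by (auto)
qed




lemma step_cases: "step u = 1 \<or> step u = -1"
  by (simp add: step_def)

lemma W2s_cases: "W2s t k k' \<in> {-1,0,1}"
  by (simp add: W2s_def Let_def)

lemma zt_struct:
  assumes "k' < length (leaves t)"
  shows "(\<Sum>k<length (inodes t). W2s t k k' * step (s k)) + b2s t k' = 1/2 \<or>
         (\<Sum>k<length (inodes t). W2s t k k' * step (s k)) + b2s t k' \<le> -3/2"
proof -
  define q where "q = leaves t ! k'"
  define P where "P = (\<lambda>p. length p < length q \<and> take (length p) q = p)"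
  define e where "e = (\<lambda>k. W2s t k k' * step (s k))"
  have qin: "q \<in> set (leaves t)" using assms q_def by simp
  have e3: "\<forall>k\<in>{..<length (inodes t)}. e k \<in> {-1,0,1}"
  proof
    fix k assume "k \<in> {..<length (inodes t)}"
    have "W2s t k k' \<in> {-1,0,1}" by (rule W2s_cases)
    moreover have "step (s k) = 1 \<or> step (s k) = -1" by (rule step_cases)
    ultimately show "e k \<in> {-1,0,1}" unfolding e_def by auto
  qed
  have "{k\<in>{..<length (inodes t)}. e k \<noteq> 0} = {k. k < length (inodes t) \<and> P (inodes t ! k)}"
  proof (intro Collect_cong iffI)
    fix k assume "k \<in> {..<length (inodes t)} \<and> e k \<noteq> 0"
    thus "k < length (inodes t) \<and> P (inodes t ! k)"
      unfolding e_def W2s_def P_def q_def Let_def by (auto split: if_splits)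
  next
    fix k assume a: "k < length (inodes t) \<and> P (inodes t ! k)"
    have "step (s k) \<noteq> 0" using step_cases[of "s k"] by auto
    moreover have "W2s t k k' \<noteq> 0" using a unfolding W2s_def P_def q_def Let_def by auto
    ultimately show "k \<in> {..<length (inodes t)} \<and> e k \<noteq> 0" using a unfolding e_def by auto
  qed
  hence card: "card {k\<in>{..<length (inodes t)}. e k \<noteq> 0} = length q"
    using count_anc[OF qin] by (simp add: length_filter_conv_card P_def)
  have b2: "b2s t k' = - real (length q) + 1/2" by (simp add: b2s_def q_def)
  from sign_sum[OF _ e3] card b2 show ?thesis unfolding e_def by auto
qed




lemma one_minus_tanh: "1 - tanh (y::real) \<le> 2 * exp (-2*y)"
proof -
  have p: "exp (-2*y) > 0" by simp
  have "1 - tanh y = 2 * exp (-2*y) / (1 + exp (-2*y))"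
  proof -
    have q: "1 + exp (-2*y) > 0" using p by linarith
    show ?thesis unfolding tanh_real_altdef using q by (simp add: field_simps add_divide_distrib[symmetric])
  qed
  also have "\<dots> \<le> 2 * exp (-2*y)"
  proof -
    have q: "1 \<le> 1 + exp (-2*y)" using p by linarith
    have "2 * exp (-2*y) \<le> 2 * exp (-2*y) * (1 + exp (-2*y))" using p q by (simp add: mult_le_cancel_left1)
    have r: "0 < 1 + exp (-2*y)" using q by linarith
    show ?thesis using r \<open>2 * exp (-2*y) \<le> 2 * exp (-2*y) * (1 + exp (-2*y))\<close> by (simp only: pos_divide_le_eq)
  qed
  finally show ?thesis .
qed

lemma abs_tanh_le1: "\<bar>tanh (y::real)\<bar> \<le> 1"
  using tanh_real_lt_1[of y] tanh_real_gt_neg1[of y] by linarith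

lemma layer1:
  fixes g e u :: real
  assumes "g \<ge> 0" "e > 0" "\<bar>u\<bar> \<ge> e"
  shows "\<bar>tanh (g*u) - step u\<bar> \<le> 2 * exp (-2*g*e)"
proof (cases "u \<ge> 0")
  case True
  have "tanh (g*u) \<le> 1" using abs_tanh_le1[of "g*u"] by simp
  hence "\<bar>tanh (g*u) - step u\<bar> = 1 - tanh (g*u)" using True by (simp add: step_def)
  also have "\<dots> \<le> 2 * exp (-2*(g*u))" by (rule one_minus_tanh)
  also have "\<dots> \<le> 2 * exp (-2*g*e)" using assms True by (simp add: mult_left_mono)
  finally show ?thesis .
next
  case False
  have "tanh (g*u) \<ge> -1" using abs_tanh_le1[of "g*u"] by simp
  hence "\<bar>tanh (g*u) - step u\<bar> = 1 - tanh (g*(-u))" using False by (simp add: step_def)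
  also have "\<dots> \<le> 2 * exp (-2*(g*(-u)))" by (rule one_minus_tanh)
  also have "\<dots> \<le> 2 * exp (-2*g*e)"
  proof -
    have "g * e \<le> g * (-u)" using assms False by (intro mult_left_mono) auto
    thus ?thesis by (simp add: mult.commute)
  qed
  finally show ?thesis .
qed

lemma layer2:
  fixes g zt zf eps :: real
  assumes "g \<ge> 0" "zt = 1/2 \<or> zt \<le> -3/2" "\<bar>zf - zt\<bar> \<le> eps"
  shows "\<bar>tanh (g*zf) - step zt\<bar> \<le> 2 * exp (-g*(1 - 2*eps))"
  using assms(2)
proof
  assume z: "zt = 1/2"
  have "tanh (g*zf) \<le> 1" using abs_tanh_le1[of "g*zf"] by simp
  hence "\<bar>tanh (g*zf) - step zt\<bar> = 1 - tanh (g*zf)" using z by (simp add: step_def)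
  also have "\<dots> \<le> 2 * exp (-2*(g*zf))" by (rule one_minus_tanh)
  also have "\<dots> \<le> 2 * exp (-g*(1 - 2*eps))"
  proof -
    have "zf \<ge> 1/2 - eps" using assms(3) z by simp
    hence "g * zf \<ge> g * (1/2 - eps)" using assms(1) by (simp add: mult_left_mono)
    thus ?thesis by (simp add: algebra_simps)
  qed
  finally show ?thesis .
next
  assume z: "zt \<le> -3/2"
  have "tanh (g*zf) \<ge> -1" using abs_tanh_le1[of "g*zf"] by simp
  hence "\<bar>tanh (g*zf) - step zt\<bar> = 1 - tanh (g*(-zf))" using z by (simp add: step_def)
  also have "\<dots> \<le> 2 * exp (-2*(g*(-zf)))" by (rule one_minus_tanh)
  also have "\<dots> \<le> 2 * exp (-g*(1 - 2*eps))"
  proof -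
    have "zf \<le> -1/2 + eps" using assms(3) z by simp
    hence "g * zf \<le> g * (-1/2 + eps)" using assms(1) by (simp add: mult_left_mono)
    thus ?thesis by (simp add: algebra_simps)
  qed
  finally show ?thesis .
qed

lemma cexp_bound:
  assumes N: "prob_space N" and B: "AE \<omega> in N. \<bar>Y \<omega>\<bar> \<le> B" "B \<ge> 0"
  shows "\<bar>cexp N X Y A\<bar> \<le> B"
proof (cases "measure N (X -` A \<inter> space N) = 0")
  case True thus ?thesis using B by (simp add: cexp_def)
next
  case False
  let ?S = "X -` A \<inter> space N"
  have S: "?S \<in> sets N" using False measure_notin_sets by blast
  interpret prob_space N by fact
  have "\<bar>\<integral>\<omega>. indicator A (X \<omega>) * Y \<omega> \<partial>N\<bar> \<le> (\<integral>\<omega>. norm (indicator A (X \<omega>) * Y \<omega>) \<partial>N)"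
    using integral_norm_bound[of N "\<lambda>\<omega>. indicator A (X \<omega>) * Y \<omega>"] by simp
  also have "\<dots> \<le> (\<integral>\<omega>. B * indicator ?S \<omega> \<partial>N)"
  proof (rule integral_mono_AE')
    show "integrable N (\<lambda>\<omega>. B * indicator ?S \<omega>)" using S
      by (intro integrable_mult_right) (auto simp: integrable_indicator_iff less_top[symmetric])
    show "AE x in N. norm (indicator A (X x) * Y x) \<le> B * indicator ?S x"
    proof (rule AE_mp[OF B(1)], rule AE_I2)
      fix x assume "x \<in> space N"
      thus "\<bar>Y x\<bar> \<le> B \<longrightarrow> norm (indicator A (X x) * Y x) \<le> B * indicator ?S x"
        using B(2) by (auto simp: indicator_def)
    qed
    show "AE x in N. 0 \<le> B * indicator ?S x" using B by simp
  qed
  also have "\<dots> = B * measure N ?S" using S by simp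
  finally have "\<bar>\<integral>\<omega>. indicator A (X \<omega>) * Y \<omega> \<partial>N\<bar> \<le> B * measure N ?S" .
  moreover have "measure N ?S > 0" using False by (simp add: zero_less_measure_iff)
  ultimately show ?thesis unfolding cexp_def by (simp add: abs_div divide_le_eq)
qed




lemma abs_sum_bound:
  fixes a b :: "nat \<Rightarrow> real"
  assumes "\<And>k. k < m \<Longrightarrow> \<bar>a k\<bar> \<le> A" "\<And>k. k < m \<Longrightarrow> \<bar>b k\<bar> \<le> C"
  shows "\<bar>\<Sum>k<m. a k * b k\<bar> \<le> real m * (A * C)"
proof -
  have "\<bar>\<Sum>k<m. a k * b k\<bar> \<le> (\<Sum>k<m. \<bar>a k * b k\<bar>)" by (rule sum_abs)
  also have "\<dots> \<le> (\<Sum>k<m. A * C)"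
  proof (rule sum_mono)
    fix k assume "k \<in> {..<m}"
    hence "\<bar>a k\<bar> \<le> A" "\<bar>b k\<bar> \<le> C" using assms by auto
    thus "\<bar>a k * b k\<bar> \<le> A * C" by (simp add: abs_mult mult_mono')
  qed
  finally show ?thesis by simp
qed

lemma pointwise:
  fixes t :: "'d::finite tree" and x :: "real^'d"
  assumes g1: "g1 \<ge> 0" and g2: "g2 \<ge> 0" and eta: "\<eta> > 0" and B: "B \<ge> 0"
    and W: "\<And>k'. \<bar>Wouts N X Y t k'\<bar> \<le> B/2"
    and eps: "real (length (inodes t)) * (2*exp(-2*g1*\<eta>)) \<le> \<epsilon>"
  shows "(f_net g1 g2 N X Y t x - t_net N X Y t x)^2 \<le>
     (real (length (leaves t)) * B * exp (-g2*(1-2*\<epsilon>)))^2 +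
     (real (length (leaves t)) * B)^2 *
       (\<Sum>k<length (inodes t). indicator {x. \<bar>W1s t k \<bullet> x + b1s t k\<bar> < \<eta>} x)"
proof -
  define m1 where "m1 = length (inodes t)"
  define K where "K = length (leaves t)"
  define u where "u = (\<lambda>k. W1s t k \<bullet> x + b1s t k)"
  define zf where "zf = (\<lambda>k'. (\<Sum>k<m1. W2s t k k' * tanh (g1 * u k)) + b2s t k')"
  define zt where "zt = (\<lambda>k'. (\<Sum>k<m1. W2s t k k' * step (u k)) + b2s t k')"
  define S where "S = (\<Sum>k<m1. indicator {x. \<bar>W1s t k \<bullet> x + b1s t k\<bar> < \<eta>} x :: real)"
  have diff: "f_net g1 g2 N X Y t x - t_net N X Y t x =
      (\<Sum>k'<K. Wouts N X Y t k' * (tanh (g2 * zf k') - step (zt k')))"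
    unfolding f_net_def t_net_def net_def zf_def zt_def u_def m1_def K_def
    by (simp add: sum_subtractf[symmetric] algebra_simps)
  have S0: "S \<ge> 0" unfolding S_def by (intro sum_nonneg) auto
  have Bsq: "0 \<le> (real K * B)^2" by simp
  show ?thesis
  proof (cases "\<forall>k<m1. \<bar>u k\<bar> \<ge> \<eta>")
    case True
    have "\<bar>zf k' - zt k'\<bar> \<le> \<epsilon>" for k'
    proof -
      have "zf k' - zt k' = (\<Sum>k<m1. W2s t k k' * (tanh (g1 * u k) - step (u k)))"
        unfolding zf_def zt_def by (simp add: sum_subtractf[symmetric] algebra_simps)
      also have "\<bar>\<dots>\<bar> \<le> real m1 * (1 * (2*exp(-2*g1*\<eta>)))"
      proof (rule abs_sum_bound)
        fix k assume "k < m1"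
        show "\<bar>W2s t k k'\<bar> \<le> 1" using W2s_cases[of t k k'] by auto
        show "\<bar>tanh (g1 * u k) - step (u k)\<bar> \<le> 2*exp(-2*g1*\<eta>)"
          using layer1[OF g1 eta] True \<open>k < m1\<close> by auto
      qed
      finally show ?thesis using eps unfolding m1_def by simp
    qed
    hence l2: "\<bar>tanh (g2 * zf k') - step (zt k')\<bar> \<le> 2 * exp (-g2*(1 - 2*\<epsilon>))" if "k' < K" for k'
      using layer2[OF g2 _] zt_struct[of k' t u] that unfolding zt_def m1_def K_def by blast
    have "\<bar>f_net g1 g2 N X Y t x - t_net N X Y t x\<bar> \<le> real K * (B/2 * (2 * exp (-g2*(1 - 2*\<epsilon>))))"
      unfolding diff by (rule abs_sum_bound) (use W l2 in auto)
    hence "\<bar>f_net g1 g2 N X Y t x - t_net N X Y t x\<bar> \<le> real K * B * exp (-g2*(1 - 2*\<epsilon>))" by simp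
    hence "(f_net g1 g2 N X Y t x - t_net N X Y t x)^2 \<le> (real K * B * exp (-g2*(1 - 2*\<epsilon>)))^2"
      by (metis abs_ge_zero order_trans power2_abs power_mono)
    thus ?thesis using S0 Bsq unfolding S_def K_def m1_def
      by (smt (verit) mult_nonneg_nonneg)
  next
    case False
    then obtain k0 where k0: "k0 < m1" "\<bar>u k0\<bar> < \<eta>" by auto
    have "S \<ge> indicator {x. \<bar>W1s t k0 \<bullet> x + b1s t k0\<bar> < \<eta>} x"
      unfolding S_def using k0(1) by (intro member_le_sum) auto
    hence S1: "S \<ge> 1" using k0(2) unfolding u_def by simp
    have "\<bar>f_net g1 g2 N X Y t x - t_net N X Y t x\<bar> \<le> real K * (B/2 * 2)"
      unfolding diff
    proof (rule abs_sum_bound)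
      fix k' show "\<bar>Wouts N X Y t k'\<bar> \<le> B/2" by (rule W)
      show "\<bar>tanh (g2 * zf k') - step (zt k')\<bar> \<le> 2"
        using abs_tanh_le1[of "g2 * zf k'"] step_cases[of "zt k'"] by auto
    qed
    hence "(f_net g1 g2 N X Y t x - t_net N X Y t x)^2 \<le> (real K * B)^2"
      by (metis abs_ge_zero order_trans power2_abs power_mono mult.assoc nonzero_mult_div_cancel_right zero_neq_numeral times_divide_eq_right mult_2_right field_sum_of_halves)
    moreover have "(real K * B)^2 \<le> (real K * B)^2 * S" using S1 Bsq by (simp add: mult_le_cancel_left1)
    ultimately show ?thesis unfolding S_def K_def m1_def
      by (smt (verit) zero_le_power2)
  qed
qed




lemma cube_emeasure: "emeasure lborel (cbox 0 (One::real^'d::finite)) = 1"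
  using emeasure_lborel_cbox_finite[of 0 "One::real^'d"] content_unit
  by (metis emeasure_eq_ennreal_measure ennreal_1 infinity_ennreal_def less_irrefl)

lemma one_nth: "(One::real^'d::finite) $ i = 1"
proof -
  have b: "axis i (1::real) \<in> Basis" by (auto simp add: Basis_vec_def)
  have "(One::real^'d) $ i = One \<bullet> axis i (1::real)" by (metis cart_eq_inner_axis)
  also have "\<dots> = (\<Sum>u\<in>Basis. u \<bullet> axis i (1::real))" by (simp add: inner_sum_left)
  also have "\<dots> = (\<Sum>u\<in>(Basis::(real^'d) set). if u = axis i (1::real) then 1 else 0)"
    using b by (intro sum.cong) (auto simp: inner_Basis)
  also have "\<dots> = 1" using b by simp
  finally show ?thesis .
qed

lemma slab_sets: "{x::real^'d::finite. \<bar>w \<bullet> x + c\<bar> < \<eta>} \<in> sets borel"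
  by (rule borel_open) (intro open_Collect_less continuous_intros)

lemma slab_measure:
  fixes j :: "'d::finite"
  assumes eta: "\<eta> > 0"
  shows "measure (uniform_measure lborel (cbox 0 (One::real^'d))) {x. \<bar>axis j 1 \<bullet> x + c\<bar> < \<eta>} \<le> 2*\<eta>"
proof -
  let ?S = "{x::real^'d. \<bar>axis j 1 \<bullet> x + c\<bar> < \<eta>}"
  define l :: "real^'d" where "l = (\<chi> i. if i = j then -c-\<eta> else 0)"
  define u :: "real^'d" where "u = (\<chi> i. if i = j then -c+\<eta> else 1)"
  have Ssets: "?S \<in> sets lborel" using slab_sets by simp
  have "measure (uniform_measure lborel (cbox 0 (One::real^'d))) ?S
        = measure lborel (cbox 0 One \<inter> ?S) / measure lborel (cbox 0 (One::real^'d))"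
    using cube_emeasure Ssets by (intro measure_uniform_measure) auto
  also have "\<dots> = measure lborel (cbox 0 One \<inter> ?S)" by simp
  also have "\<dots> \<le> measure lborel (cbox l u)"
  proof (rule measure_mono_fmeasurable)
    show "cbox 0 One \<inter> ?S \<subseteq> cbox l u"
    proof
      fix x assume x: "x \<in> cbox 0 One \<inter> ?S"
      hence "\<forall>i. 0 \<le> x$i \<and> x$i \<le> 1" unfolding mem_box_cart Int_iff one_nth by simp
      moreover have "\<bar>x$j + c\<bar> < \<eta>" using x by (simp add: inner_axis')
      ultimately show "x \<in> cbox l u" unfolding l_def u_def mem_box_cart by auto
    qed
    show "cbox 0 One \<inter> ?S \<in> sets lborel" using Ssets by simp
  qed auto
  also have "\<dots> = prod (\<lambda>i. u$i - l$i) UNIV"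
  proof (rule content_cbox_cart)
    have "l \<in> cbox l u" unfolding l_def u_def mem_box_cart using eta by auto
    thus "cbox l u \<noteq> {}" by auto
  qed
  also have "\<dots> = prod (\<lambda>i. if i = j then 2*\<eta> else 1) UNIV"
    by (intro prod.cong) (auto simp: l_def u_def)
  also have "\<dots> = 2*\<eta>" by (simp add: prod.delta)
  finally show ?thesis .
qed




lemma integral_bound:
  fixes t :: "'d::finite tree"
  assumes g1: "g1 \<ge> 0" and g2: "g2 \<ge> 0" and eta: "\<eta> > 0" and B: "B \<ge> 0"
    and W: "\<And>k'. \<bar>Wouts N X Y t k'\<bar> \<le> B/2"
    and eps: "real (length (inodes t)) * (2*exp(-2*g1*\<eta>)) \<le> \<epsilon>"
  shows "(LINT x : cbox 0 One | uniform_measure lborel (cbox 0 (One::real^'d)).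
            (f_net g1 g2 N X Y t x - t_net N X Y t x)\<^sup>2) \<le>
     (real (length (leaves t)) * B * exp (-g2*(1-2*\<epsilon>)))^2 +
     (real (length (leaves t)) * B)^2 * (real (length (inodes t)) * (2*\<eta>))"
proof -
  let ?\<mu> = "uniform_measure lborel (cbox 0 (One::real^'d))"
  define m1 where "m1 = length (inodes t)"
  define C1 where "C1 = (real (length (leaves t)) * B * exp (-g2*(1-2*\<epsilon>)))^2"
  define C2 where "C2 = (real (length (leaves t)) * B)^2"
  define sl where "sl = (\<lambda>k. {x::real^'d. \<bar>W1s t k \<bullet> x + b1s t k\<bar> < \<eta>})"
  define h where "h = (\<lambda>x. (f_net g1 g2 N X Y t x - t_net N X Y t x)\<^sup>2)"
  interpret P: prob_space ?\<mu> using cube_emeasure by (intro prob_space_uniform_measure) auto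
  have slsets: "sl k \<in> sets ?\<mu>" for k unfolding sl_def using slab_sets by simp
  have slint: "integrable ?\<mu> (indicator (sl k) :: _ \<Rightarrow> real)" for k
  proof -
    have "integrable ?\<mu> (\<lambda>x. indicator (sl k) x *\<^sub>R (1::real))"
      by (rule integrable_indicator[OF slsets]) (metis P.emeasure_finite infinity_ennreal_def less_top)
    thus ?thesis by simp
  qed
  have C2: "C2 \<ge> 0" unfolding C2_def by simp
  have pw: "h x \<le> C1 + C2 * (\<Sum>k<m1. indicator (sl k) x)" for x
    unfolding h_def C1_def C2_def m1_def sl_def by (rule pointwise[OF g1 g2 eta B W eps])
  have "(LINT x : cbox 0 One | ?\<mu>. h x) = (\<integral>x. indicator (cbox 0 One) x *\<^sub>R h x \<partial>?\<mu>)"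
    by (simp add: set_lebesgue_integral_def)
  also have "\<dots> \<le> (\<integral>x. C1 + C2 * (\<Sum>k<m1. indicator (sl k) x) \<partial>?\<mu>)"
  proof (rule integral_mono')
    show "integrable ?\<mu> (\<lambda>x. C1 + C2 * (\<Sum>k<m1. indicator (sl k) x))"
      using slint by (intro Bochner_Integration.integrable_add integrable_mult_right integrable_sum) auto
    fix x
    have h0: "h x \<ge> 0" unfolding h_def by simp
    have s0: "(\<Sum>k<m1. indicator (sl k) x :: real) \<ge> 0" by (intro sum_nonneg) auto
    show "indicator (cbox 0 One) x *\<^sub>R h x \<le> C1 + C2 * (\<Sum>k<m1. indicator (sl k) x)"
      using pw[of x] h0 by (auto simp: indicator_def)
    show "0 \<le> C1 + C2 * (\<Sum>k<m1. indicator (sl k) x)"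
      using s0 C2 unfolding C1_def by simp
  qed
  also have "\<dots> = C1 + C2 * (\<Sum>k<m1. measure ?\<mu> (sl k))"
    using slint slsets by (simp add: Bochner_Integration.integral_add integral_sum)
  also have "\<dots> \<le> C1 + C2 * (\<Sum>k<m1. 2*\<eta>)"
  proof -
    have "measure ?\<mu> (sl k) \<le> 2*\<eta>" for k
      unfolding sl_def W1s_def using slab_measure[OF eta] by blast
    hence "(\<Sum>k<m1. measure ?\<mu> (sl k)) \<le> (\<Sum>k<m1. 2*\<eta>)" by (intro sum_mono)
    thus ?thesis using C2 by (simp add: mult_left_mono)
  qed
  finally show ?thesis unfolding h_def C1_def C2_def m1_def by simp
qed




lemma ineqs:
  fixes k g1 g2 :: real
  assumes k: "k \<ge> 1" and g1: "g1 \<ge> exp 1" and g2: "g2 \<ge> 1"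
  shows "k*g2/g1^2 \<le> k^4*g2^2*ln g1/g1" "k^3*ln g1/g1 \<le> k^4*g2^2*ln g1/g1"
    "0 \<le> k*g2/g1^2" "0 \<le> k^3*ln g1/g1"
proof -
  have e1: "exp 1 \<ge> (1::real)" by simp
  have g1p: "g1 \<ge> 1" using g1 e1 by linarith
  have L: "ln g1 \<ge> 1" using g1 g1p by (subst ln_ge_iff) auto
  have k4: "k \<le> k^4" using power_increasing[of 1 4 k] k by simp
  have k34: "k^3 \<le> k^4" using power_increasing[of 3 4 k] k by simp
  have g22: "g2 \<le> g2^2" using power_increasing[of 1 2 g2] g2 by simp
  have g22': "1 \<le> g2^2" using g2 g22 by linarith
  have "k*g2 \<le> k^4*g2^2" using k4 g22 k g2 by (intro mult_mono) auto
  also have "\<dots> \<le> k^4*g2^2*ln g1" using mult_left_mono[OF L, of "k^4*g2^2"] k by simp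
  finally have a: "k*g2 \<le> k^4*g2^2*ln g1" .
  have "k*g2/g1^2 \<le> k*g2/g1" using g1p k g2 
    by (intro divide_left_mono) (auto simp: power2_eq_square)
  also have "\<dots> \<le> k^4*g2^2*ln g1/g1" using a g1p by (intro divide_right_mono) auto
  finally show "k*g2/g1^2 \<le> k^4*g2^2*ln g1/g1" .
  have "k^3 \<le> k^4*g2^2" using mult_mono[OF k34 g22'] k by simp
  hence "k^3*ln g1 \<le> k^4*g2^2*ln g1" using L by (intro mult_right_mono) auto
  thus "k^3*ln g1/g1 \<le> k^4*g2^2*ln g1/g1" using g1p by (intro divide_right_mono) auto
  show "0 \<le> k*g2/g1^2" using k g2 by simp
  show "0 \<le> k^3*ln g1/g1" using k L g1p by simp
qed




theorem proposition2:
  fixes N :: "'o measure" and X :: "'o \<Rightarrow> real^'d::finite" and Y :: "'o \<Rightarrow> real"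
    and M :: "nat \<Rightarrow> 'w measure" and T :: "nat \<Rightarrow> 'w \<Rightarrow> 'd tree"
    and K :: "nat \<Rightarrow> nat" and \<gamma>1 \<gamma>2 :: "nat \<Rightarrow> real"
  assumes "prob_space N"
    and "X \<in> N \<rightarrow>\<^sub>M borel" and "Y \<in> borel_measurable N"
    and "distr N borel X = uniform_measure lborel (cbox 0 One)"
    and "\<exists>B. AE \<omega> in N. \<bar>Y \<omega>\<bar> \<le> B"
    and "\<And>n. prob_space (M n)"
    and "\<And>n \<omega>. \<omega> \<in> space (M n) \<Longrightarrow> length (leaves (T n \<omega>)) = K n"
    and "filterlim (\<lambda>n. real (K n)) at_top sequentially"
    and "filterlim \<gamma>1 at_top sequentially"
    and "filterlim \<gamma>2 at_top sequentially"
    and "(\<lambda>n. real (K n) ^ 2 * exp (- 2 * \<gamma>2 n)) \<longlonglongrightarrow> 0"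
    and "(\<lambda>n. real (K n) ^ 4 * \<gamma>2 n ^ 2 * ln (\<gamma>1 n) / \<gamma>1 n) \<longlonglongrightarrow> 0"
  shows "(\<lambda>n. \<integral>\<^sup>+ \<omega>. ennreal (LINT x : cbox 0 One | distr N borel X.
            (f_net (\<gamma>1 n) (\<gamma>2 n) N X Y (T n \<omega>) x - t_net N X Y (T n \<omega>) x)\<^sup>2) \<partial>M n)
         \<longlonglongrightarrow> 0"
proof -
  obtain B0 where B0: "AE \<omega> in N. \<bar>Y \<omega>\<bar> \<le> B0" using assms(5) by blast
  define B where "B = \<bar>B0\<bar>"
  have BAE: "AE \<omega> in N. \<bar>Y \<omega>\<bar> \<le> B" using B0 unfolding B_def by eventually_elim auto
  have B: "B \<ge> 0" unfolding B_def by simp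
  have W: "\<bar>Wouts N X Y t k'\<bar> \<le> B/2" for t k'
    using cexp_bound[OF assms(1) BAE B] unfolding Wouts_def by simp
  define k where "k = (\<lambda>n. real (K n))"
  define r where "r = (\<lambda>n. k n * \<gamma>2 n / \<gamma>1 n ^ 2)"
  define s where "s = (\<lambda>n. k n ^ 3 * ln (\<gamma>1 n) / \<gamma>1 n)"
  define A where "A = (\<lambda>n. k n ^ 4 * \<gamma>2 n ^ 2 * ln (\<gamma>1 n) / \<gamma>1 n)"
  define \<eta> where "\<eta> = (\<lambda>n. ln (\<gamma>1 n) / \<gamma>1 n)"
  define \<epsilon> where "\<epsilon> = (\<lambda>n. k n * (2 / \<gamma>1 n ^ 2))"
  define bnd where "bnd = (\<lambda>n. B^2 * (k n ^ 2 * exp (-2 * \<gamma>2 n)) * exp (8 * r n) + 2 * B^2 * s n)"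
  have ev: "eventually (\<lambda>n. k n \<ge> 1 \<and> \<gamma>1 n \<ge> exp 1 \<and> \<gamma>2 n \<ge> 1) sequentially"
  proof -
    have "eventually (\<lambda>n. k n \<ge> 1) sequentially"
      using assms(8) unfolding filterlim_at_top k_def by blast
    moreover have "eventually (\<lambda>n. \<gamma>1 n \<ge> exp 1) sequentially"
      using assms(9) unfolding filterlim_at_top by blast
    moreover have "eventually (\<lambda>n. \<gamma>2 n \<ge> 1) sequentially"
      using assms(10) unfolding filterlim_at_top by blast
    ultimately show ?thesis by eventually_elim auto
  qed
  have A0: "A \<longlonglongrightarrow> 0" using assms(12) unfolding A_def k_def .
  have r0: "r \<longlonglongrightarrow> 0"
  proof (rule tendsto_sandwich[OF _ _ tendsto_const A0])
    show "eventually (\<lambda>n. 0 \<le> r n) sequentially"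
      using ev by eventually_elim (use ineqs in \<open>auto simp: r_def\<close>)
    show "eventually (\<lambda>n. r n \<le> A n) sequentially"
      using ev by eventually_elim (use ineqs in \<open>auto simp: r_def A_def\<close>)
  qed
  have s0: "s \<longlonglongrightarrow> 0"
  proof (rule tendsto_sandwich[OF _ _ tendsto_const A0])
    show "eventually (\<lambda>n. 0 \<le> s n) sequentially"
      using ev by eventually_elim (use ineqs in \<open>auto simp: s_def\<close>)
    show "eventually (\<lambda>n. s n \<le> A n) sequentially"
      using ev by eventually_elim (use ineqs in \<open>auto simp: s_def A_def\<close>)
  qed
  have bnd0: "bnd \<longlonglongrightarrow> 0"
  proof -
    have "(\<lambda>n. B^2 * (k n ^ 2 * exp (-2 * \<gamma>2 n)) * exp (8 * r n) + 2 * B^2 * s n)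
          \<longlonglongrightarrow> B^2 * 0 * exp (8 * 0) + 2 * B^2 * 0"
      using assms(11) r0 s0 unfolding k_def by (intro tendsto_intros)
    thus ?thesis unfolding bnd_def by simp
  qed
  have key: "eventually (\<lambda>n. (\<integral>\<^sup>+ \<omega>. ennreal (LINT x : cbox 0 One | distr N borel X.
            (f_net (\<gamma>1 n) (\<gamma>2 n) N X Y (T n \<omega>) x - t_net N X Y (T n \<omega>) x)\<^sup>2) \<partial>M n)
         \<le> ennreal (bnd n)) sequentially"
    using ev
  proof eventually_elim
    case (elim n)
    have k1: "k n \<ge> 1" and g1: "\<gamma>1 n \<ge> exp 1" and g2: "\<gamma>2 n \<ge> 1" using elim by auto
    have g1p: "\<gamma>1 n \<ge> 1" using g1 one_le_exp_iff[of "1::real"] by linarith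
    have L: "ln (\<gamma>1 n) \<ge> 1" using g1 g1p by (subst ln_ge_iff) auto
    have eta: "\<eta> n > 0" unfolding \<eta>_def using L g1p by (intro divide_pos_pos) linarith+
    have expeq: "exp (-2 * \<gamma>1 n * \<eta> n) = 1 / \<gamma>1 n ^ 2"
    proof -
      have "-2 * \<gamma>1 n * \<eta> n = - (2 * ln (\<gamma>1 n))" unfolding \<eta>_def using g1p by simp
      hence "exp (-2 * \<gamma>1 n * \<eta> n) = inverse (exp (ln (\<gamma>1 n)) ^ 2)"
        by (simp add: exp_minus exp_of_nat_mult[symmetric])
      thus ?thesis using g1p by (simp add: inverse_eq_divide)
    qed
    have pt: "ennreal (LINT x : cbox 0 One | distr N borel X.
            (f_net (\<gamma>1 n) (\<gamma>2 n) N X Y (T n \<omega>) x - t_net N X Y (T n \<omega>) x)\<^sup>2) \<le> ennreal (bnd n)"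
      if \<omega>: "\<omega> \<in> space (M n)" for \<omega>
    proof (rule ennreal_leI)
      let ?t = "T n \<omega>"
      have lv: "length (leaves ?t) = K n" using assms(7) \<omega> .
      have li: "real (length (inodes ?t)) \<le> k n" using len_inodes[of ?t] lv unfolding k_def by simp
      have epsle: "real (length (inodes ?t)) * (2*exp(-2*\<gamma>1 n*\<eta> n)) \<le> \<epsilon> n"
        unfolding expeq \<epsilon>_def using mult_right_mono[OF li, of "2 / \<gamma>1 n ^ 2"] by simp
      have "(LINT x : cbox 0 One | distr N borel X.
            (f_net (\<gamma>1 n) (\<gamma>2 n) N X Y ?t x - t_net N X Y ?t x)\<^sup>2) \<le>
         (real (length (leaves ?t)) * B * exp (-\<gamma>2 n*(1-2*\<epsilon> n)))^2 +
         (real (length (leaves ?t)) * B)^2 * (real (length (inodes ?t)) * (2*\<eta> n))"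
        unfolding assms(4) using g1p g2 eta B W epsle by (intro integral_bound) auto
      also have "\<dots> \<le> (k n * B * exp (-\<gamma>2 n*(1-2*\<epsilon> n)))^2 + (k n * B)^2 * (k n * (2*\<eta> n))"
      proof -
        have "(k n * B)^2 * (real (length (inodes ?t)) * (2*\<eta> n)) \<le> (k n * B)^2 * (k n * (2*\<eta> n))"
          using li eta by (intro mult_left_mono mult_right_mono) auto
        moreover have "real (length (leaves ?t)) = k n" using lv unfolding k_def by simp
        ultimately show ?thesis by simp
      qed
      also have "\<dots> = bnd n"
      proof -
        have "exp (-\<gamma>2 n*(1-2*\<epsilon> n))^2 = exp (-2 * \<gamma>2 n) * exp (8 * r n)"
          unfolding r_def \<epsilon>_def
          by (simp add: power2_eq_square exp_add[symmetric] algebra_simps)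
        thus ?thesis unfolding bnd_def s_def \<eta>_def
          by (simp add: power_mult_distrib algebra_simps power2_eq_square power3_eq_cube)
      qed
      finally show "(LINT x : cbox 0 One | distr N borel X.
            (f_net (\<gamma>1 n) (\<gamma>2 n) N X Y ?t x - t_net N X Y ?t x)\<^sup>2) \<le> bnd n" .
    qed
    have "(\<integral>\<^sup>+ \<omega>. ennreal (LINT x : cbox 0 One | distr N borel X.
            (f_net (\<gamma>1 n) (\<gamma>2 n) N X Y (T n \<omega>) x - t_net N X Y (T n \<omega>) x)\<^sup>2) \<partial>M n)
         \<le> (\<integral>\<^sup>+ \<omega>. ennreal (bnd n) \<partial>M n)"
      using pt by (intro nn_integral_mono) auto
    also have "\<dots> = ennreal (bnd n)"
      using prob_space.emeasure_space_1[OF assms(6)[of n]] by simp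
    finally show ?case .
  qed
  have "(\<lambda>n. ennreal (bnd n)) \<longlonglongrightarrow> ennreal 0" using bnd0 by (rule tendsto_ennrealI)
  hence b0: "(\<lambda>n. ennreal (bnd n)) \<longlonglongrightarrow> 0" by simp
  show ?thesis
    by (rule tendsto_sandwich[OF _ key tendsto_const b0]) simp
qed


end
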